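(* Let $t,k\ge1$ with $k\le t/6$ and let $F$ be a $[t,k]$-interval system. Then there exists a randomized $[t,k]$-interval system $\mathcal{F}$ such that (1) $\mathrm{Sets}(\mathcal{F})=\mathrm{Sets}(F)$; (2) $\mathrm{val}(\mathcal{F})\le5\,\mathrm{val}(F)$; (3) $\mathcal{F}$ is valid.
   Context: An interval is a nonempty set $\{a,\ldots,b\}$ of integers; a $[t,k]$-interval system is a set of $k$ pairwise disjoint intervals contained in $[t]$; a randomized one is a distribution over such systems. $\mathrm{val}(F)=\sum_{I\in F}1/|I|$, $\mathrm{val}(\mathcal{F})=\mathbb{E}_{F\sim\mathcal{F}}\mathrm{val}(F)$. $\mathrm{Sets}(F)$ is the distribution of the set obtained by choosing independently a uniform element from each interval of $F$; $\mathrm{Sets}(\mathcal{F})$ samples $F\sim\mathcal{F}$ then a set from $\mathrm{Sets}(F)$. A $[t]$-interval system $F$ is valid if $\sum_{I\in F}|I|\le t/2$; a randomized one is valid if every system in its support is valid. *)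

theory Defs
  imports "HOL-Probability.Probability"
begin

definition is_interval :: "int set \<Rightarrow> bool" where
  "is_interval I \<longleftrightarrow> (\<exists>a b. a \<le> b \<and> I = {a..b})"

definition interval_system :: "nat \<Rightarrow> nat \<Rightarrow> int set set \<Rightarrow> bool" where
  "interval_system t k F \<longleftrightarrow>
     finite F \<and> card F = k \<and>
     (\<forall>I\<in>F. is_interval I \<and> I \<subseteq> {1..int t}) \<and>
     (\<forall>I\<in>F. \<forall>J\<in>F. I \<noteq> J \<longrightarrow> I \<inter> J = {})"

definition rand_interval_system :: "nat \<Rightarrow> nat \<Rightarrow> int set set pmf \<Rightarrow> bool" where
  "rand_interval_system t k \<F> \<longleftrightarrow> (\<forall>F\<in>set_pmf \<F>. interval_system t k F)"

definition val :: "int set set \<Rightarrow> real" where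
  "val F = (\<Sum>I\<in>F. 1 / real (card I))"

definition rval :: "int set set pmf \<Rightarrow> real" where
  "rval \<F> = measure_pmf.expectation \<F> val"

definition Sets :: "int set set \<Rightarrow> int set pmf" where
  "Sets F = map_pmf (\<lambda>f. f ` F) (Pi_pmf F undefined (\<lambda>I. pmf_of_set I))"

definition rSets :: "int set set pmf \<Rightarrow> int set pmf" where
  "rSets \<F> = bind_pmf \<F> Sets"

definition valid :: "nat \<Rightarrow> int set set \<Rightarrow> bool" where
  "valid t F \<longleftrightarrow> real (\<Sum>I\<in>F. card I) \<le> real t / 2"

definition rvalid :: "nat \<Rightarrow> int set set pmf \<Rightarrow> bool" where
  "rvalid t \<F> \<longleftrightarrow> (\<forall>F\<in>set_pmf \<F>. valid t F)"

end

theory Submission imports Defs begin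

definition sz :: "int set \<Rightarrow> int" where "sz I = int (card I div 4 + 1)"
definition blk :: "int set \<Rightarrow> int \<Rightarrow> int set" where
  "blk I x = {y\<in>I. (y - Min I) div sz I = (x - Min I) div sz I}"

lemma sz_pos: "sz I > 0" by (simp add: sz_def)

lemma blk_self: "x \<in> I \<Longrightarrow> x \<in> blk I x" by (simp add: blk_def)
lemma blk_sub: "blk I x \<subseteq> I" by (auto simp: blk_def)
lemma blk_eq: "y \<in> blk I x \<Longrightarrow> blk I y = blk I x" by (auto simp: blk_def)

lemma div_range:
  fixes z q s :: int assumes "s > 0"
  shows "z div s = q \<longleftrightarrow> q * s \<le> z \<and> z < q * s + s"
proof
  assume h: "z div s = q"
  have "z = s * (z div s) + z mod s" by simp
  moreover have "0 \<le> z mod s" "z mod s < s" using assms by auto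
  ultimately show "q * s \<le> z \<and> z < q * s + s" using h by (simp add: mult.commute)
next
  assume "q * s \<le> z \<and> z < q * s + s"
  then show "z div s = q" by (intro int_div_pos_eq[of z s q "z - s*q"]) (auto simp: mult.commute)
qed


lemma Min_ab: "a \<le> b \<Longrightarrow> Min {a..b::int} = a" by (intro Min_eqI) auto

lemma blk_ab:
  fixes a b x :: int assumes "a \<le> b" "x \<in> {a..b}"
  shows "blk {a..b} x = {a + (x-a) div sz {a..b} * sz {a..b} .. min b (a + (x-a) div sz {a..b} * sz {a..b} + sz {a..b} - 1)}"
proof -
  define s where "s = sz {a..b}"
  define q where "q = (x-a) div s"
  have s: "s > 0" using sz_pos s_def by auto
  have q0: "q \<ge> 0" using assms s by (simp add: q_def pos_imp_zdiv_nonneg_iff)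
  have qs: "0 \<le> q * s" using q0 s by simp
  have "y \<in> blk {a..b} x \<longleftrightarrow> y \<in> atLeastAtMost (a + q * s) (min b (a + q * s + s - 1))" for y
  proof -
    have "y \<in> blk {a..b} x \<longleftrightarrow> a \<le> y \<and> y \<le> b \<and> (y - a) div s = q"
      using assms by (simp add: blk_def s_def q_def Min_ab)
    also have "\<dots> \<longleftrightarrow> a \<le> y \<and> y \<le> b \<and> q * s \<le> y - a \<and> y - a < q * s + s"
      using div_range[OF s] by simp
    also have "\<dots> \<longleftrightarrow> y \<in> atLeastAtMost (a + q * s) (min b (a + q * s + s - 1))"
      using qs by auto
    finally show ?thesis .
  qed
  then show ?thesis unfolding s_def[symmetric] q_def[symmetric] by blast
qed

lemma blk_interval:
  fixes a b x :: int assumes "a \<le> b" "x \<in> {a..b}"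
  shows "is_interval (blk {a..b} x)"
proof -
  define L where "L = a + (x-a) div sz {a..b} * sz {a..b}"
  define H where "H = min b (a + (x-a) div sz {a..b} * sz {a..b} + sz {a..b} - 1)"
  have e: "blk {a..b} x = {L..H}" using blk_ab[OF assms] by (simp add: L_def H_def)
  have "x \<in> blk {a..b} x" using assms blk_self by blast
  then have "L \<le> H" using e by simp
  then show ?thesis unfolding is_interval_def using e by blast
qed

lemma card_ab: "a \<le> b \<Longrightarrow> card {a..b::int} = nat (b - a + 1)" by simp

lemma blk_card:
  fixes a b x :: int assumes "a \<le> b" "x \<in> {a..b}"
  shows "card (blk {a..b} x) \<le> card {a..b} div 4 + 1"
proof -
  define s where "s = sz {a..b}"
  define q where "q = (x-a) div s"
  have "blk {a..b} x \<subseteq> atLeastAtMost (a + q * s) (a + q * s + s - 1)"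
    using blk_ab[OF assms] unfolding s_def[symmetric] q_def[symmetric] by auto
  then have "card (blk {a..b} x) \<le> card (atLeastAtMost (a + q * s) (a + q * s + s - 1))"
    by (intro card_mono) auto
  also have "\<dots> = nat s" by simp
  also have "\<dots> = card {a..b} div 4 + 1" by (simp add: s_def sz_def)
  finally show ?thesis .
qed

lemma blk_count:
  fixes a b :: int assumes "a \<le> b"
  shows "card (blk {a..b} ` {a..b}) \<le> 4"
proof -
  define s where "s = sz {a..b}"
  have s: "s > 0" using sz_pos s_def by auto
  have "blk {a..b} ` {a..b} \<subseteq> (\<lambda>q. {y\<in>{a..b}. (y - a) div s = q}) ` {0..3}"
  proof
    fix B assume "B \<in> blk {a..b} ` {a..b}"
    then obtain x where x: "x \<in> {a..b}" "B = blk {a..b} x" by auto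
    have "4 * s > b - a"
      using assms by (simp add: s_def sz_def)
    then have "x - a < 4 * s" using x by auto
    then have "(x - a) div s \<le> (4 * s - 1) div s" using s by (intro zdiv_mono1) auto
    moreover have "(4 * s - 1) div s = 3" using s by (subst div_range[OF s]) auto
    ultimately have "(x - a) div s < 4" by simp
    moreover have "(x - a) div s \<ge> 0" using x s by (simp add: pos_imp_zdiv_nonneg_iff)
    ultimately have "(x-a) div s \<in> {0..3}" by auto
    moreover have "B = {y\<in>{a..b}. (y - a) div s = (x-a) div s}"
      using x assms by (simp add: blk_def s_def Min_ab)
    ultimately show "B \<in> (\<lambda>q. {y\<in>{a..b}. (y - a) div s = q}) ` {0..3}" by blast
  qed
  then have "card (blk {a..b} ` {a..b}) \<le> card ((\<lambda>q. {y\<in>{a..b}. (y - a) div s = q}) ` {0..3::int})"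
    by (intro card_mono) auto
  also have "\<dots> \<le> card {0..3::int}" by (rule card_image_le) simp
  finally show ?thesis by simp
qed


lemma mix:
  fixes I :: "'a set" and P :: "'a \<Rightarrow> 'a set"
  assumes fin: "finite I" and ne: "I \<noteq> {}" and self: "\<And>x. x \<in> I \<Longrightarrow> x \<in> P x"
    and sub: "\<And>x. P x \<subseteq> I" and eq: "\<And>x y. x \<in> I \<Longrightarrow> y \<in> P x \<Longrightarrow> P y = P x"
  shows "bind_pmf (pmf_of_set I) (\<lambda>x. pmf_of_set (P x)) = pmf_of_set I"
proof (rule pmf_eqI)
  fix y
  have finP: "finite (P x)" for x using sub fin finite_subset by blast
  have neP: "x \<in> I \<Longrightarrow> P x \<noteq> {}" for x using self by blast
  have "pmf (bind_pmf (pmf_of_set I) (\<lambda>x. pmf_of_set (P x))) y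
        = (\<Sum>x\<in>I. pmf (pmf_of_set (P x)) y) / card I"
    by (simp add: pmf_bind integral_pmf_of_set[OF ne fin])
  also have "(\<Sum>x\<in>I. pmf (pmf_of_set (P x)) y) = (\<Sum>x\<in>I. indicator (P x) y / card (P x))"
    by (intro sum.cong refl) (simp add: pmf_of_set[OF neP finP])
  also have "\<dots> = indicator I y"
  proof (cases "y \<in> I")
    case True
    have "(\<Sum>x\<in>I. indicator (P x) y / card (P x)) = (\<Sum>x\<in>I. indicator (P y) x / card (P y))"
    proof (intro sum.cong refl)
      fix x assume x: "x \<in> I"
      show "indicator (P x) y / real (card (P x)) = indicator (P y) x / real (card (P y))"
      proof (cases "y \<in> P x")
        case True
        then have "P y = P x" using eq x by blast
        then show ?thesis using True x self by (simp add: indicator_def of_bool_def)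
      next
        case False
        have "x \<notin> P y"
        proof
          assume "x \<in> P y"
          then have "P x = P y" using eq \<open>y \<in> I\<close> by blast
          then show False using False self[OF \<open>y \<in> I\<close>] by simp
        qed
        then show ?thesis using False by (simp add: indicator_def of_bool_def)
      qed
    qed
    also have "\<dots> = (\<Sum>x\<in>I. indicator (P y) x) / card (P y)"
      by (simp add: sum_divide_distrib)
    also have "(\<Sum>x\<in>I. indicator (P y) x) = real (card (I \<inter> P y))"
      using sum.inter_restrict[OF fin, of "\<lambda>_. 1::real" "P y"] by (simp add: indicator_def of_bool_def)
    also have "I \<inter> P y = P y" using sub by blast
    finally show ?thesis using True neP[OF True] finP[of y] by (simp add: card_gt_0_iff)
  next
    case False
    then have "y \<notin> P x" for x using sub by blast
    then show ?thesis using False by simp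
  qed
  finally show "pmf (bind_pmf (pmf_of_set I) (\<lambda>x. pmf_of_set (P x))) y = pmf (pmf_of_set I) y"
    using ne fin by simp
qed

lemma mix_val:
  fixes I :: "'a set" and P :: "'a \<Rightarrow> 'a set"
  assumes fin: "finite I" and ne: "I \<noteq> {}" and self: "\<And>x. x \<in> I \<Longrightarrow> x \<in> P x"
    and sub: "\<And>x. P x \<subseteq> I" and eq: "\<And>x y. x \<in> I \<Longrightarrow> y \<in> P x \<Longrightarrow> P y = P x"
  shows "(\<Sum>x\<in>I. 1 / real (card (P x))) = real (card (P ` I))"
proof -
  have finP: "finite (P x)" for x using sub fin finite_subset by blast
  have "(\<Sum>x\<in>I. 1 / real (card (P x))) = (\<Sum>B\<in>P ` I. \<Sum>x\<in>{x\<in>I. P x = B}. 1 / real (card (P x)))"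
    by (rule sum.image_gen[OF fin])
  also have "\<dots> = (\<Sum>B\<in>P ` I. 1)"
  proof (intro sum.cong refl)
    fix B assume "B \<in> P ` I"
    then obtain z where z: "z \<in> I" "B = P z" by auto
    have "{x\<in>I. P x = B} = P z"
    proof
      show "{x\<in>I. P x = B} \<subseteq> P z" using z self by auto
      show "P z \<subseteq> {x\<in>I. P x = B}"
      proof
        fix x assume x: "x \<in> P z"
        then have "x \<in> I" using sub by blast
        moreover have "P x = P z" using eq z(1) x by blast
        ultimately show "x \<in> {x\<in>I. P x = B}" using z by simp
      qed
    qed
    then have "(\<Sum>x\<in>{x\<in>I. P x = B}. 1 / real (card (P x))) = (\<Sum>x\<in>P z. 1 / real (card (P z)))"
      using z eq by (intro sum.cong) auto
    also have "\<dots> = 1" using finP[of z] self[OF z(1)] by (auto simp: card_gt_0_iff)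
    finally show "(\<Sum>x\<in>{x\<in>I. P x = B}. 1 / real (card (P x))) = 1" .
  qed
  finally show ?thesis by simp
qed

lemma Pi_img_insert:
  assumes "finite A" "x \<notin> A"
  shows "map_pmf (\<lambda>f. f ` insert x A) (Pi_pmf (insert x A) d p)
       = map_pmf (\<lambda>(y,S). insert y S) (pair_pmf (p x) (map_pmf (\<lambda>f. f ` A) (Pi_pmf A d p)))"
proof -
  have "pair_pmf (p x) (map_pmf (\<lambda>f. f ` A) (Pi_pmf A d p))
     = map_pmf (\<lambda>(y, f). (id y, f ` A)) (pair_pmf (p x) (Pi_pmf A d p))"
    by (simp add: map_pair pmf.map_id)
  moreover have "A \<inter> {y. y \<noteq> x} = A" using assms by auto
  ultimately show ?thesis using assms
    by (simp add: Pi_pmf_insert map_pmf_comp case_prod_beta fun_upd_image)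
qed

lemma Pi_img_reindex:
  assumes "finite F" "inj_on g F"
  shows "map_pmf (\<lambda>f. f ` (g ` F)) (Pi_pmf (g ` F) d q)
       = map_pmf (\<lambda>h. h ` F) (Pi_pmf F d (\<lambda>I. q (g I)))"
  using assms
proof (induction F rule: finite_induct)
  case empty
  then show ?case by simp
next
  case (insert x A)
  have gx: "g x \<notin> g ` A" using insert by auto
  have inj: "inj_on g A" using insert by auto
  have "map_pmf (\<lambda>f. f ` (g ` insert x A)) (Pi_pmf (g ` insert x A) d q)
      = map_pmf (\<lambda>(y,S). insert y S) (pair_pmf (q (g x)) (map_pmf (\<lambda>f. f ` (g ` A)) (Pi_pmf (g ` A) d q)))"
    using Pi_img_insert[of "g ` A" "g x" d q] gx insert(1) by simp
  also have "\<dots> = map_pmf (\<lambda>(y,S). insert y S) (pair_pmf (q (g x)) (map_pmf (\<lambda>h. h ` A) (Pi_pmf A d (\<lambda>I. q (g I)))))"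
    using insert(3)[OF inj] by simp
  also have "\<dots> = map_pmf (\<lambda>h. h ` insert x A) (Pi_pmf (insert x A) d (\<lambda>I. q (g I)))"
    using Pi_img_insert[of A x d "\<lambda>I. q (g I)"] insert(1,2) by simp
  finally show ?case .
qed


lemma interval_ab: "is_interval I \<Longrightarrow> \<exists>a b. a \<le> b \<and> I = {a..b}"
  by (simp add: is_interval_def)

lemma inv_nat_le1: "1 / real (n::nat) \<le> 1" by (cases n) auto

theorem mainTheorem14:
  fixes t k :: nat and F :: "int set set"
  assumes "t \<ge> 1" and "k \<ge> 1" and "real k \<le> real t / 6"
    and "interval_system t k F"
  shows "\<exists>\<F>. rand_interval_system t k \<F> \<and> rSets \<F> = Sets F \<and>
              rval \<F> \<le> 5 * val F \<and> rvalid t \<F>"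
proof -
  have finF: "finite F" and cardF: "card F = k"
    and intv: "\<And>I. I \<in> F \<Longrightarrow> is_interval I" and inT: "\<And>I. I \<in> F \<Longrightarrow> I \<subseteq> {1..int t}"
    and disj: "\<And>I J. I \<in> F \<Longrightarrow> J \<in> F \<Longrightarrow> I \<noteq> J \<Longrightarrow> I \<inter> J = {}"
    using assms(4) unfolding interval_system_def by blast+
  have Ifin: "finite I" if "I \<in> F" for I using intv[OF that] by (auto simp: is_interval_def)
  have Ine: "I \<noteq> {}" if "I \<in> F" for I using intv[OF that] by (auto simp: is_interval_def)
  define p where "p = (\<lambda>I. map_pmf (blk I) (pmf_of_set I))"
  define G where "G = Pi_pmf F undefined p"
  define FF where "FF = map_pmf (\<lambda>g. g ` F) G"
  have supp: "\<exists>x\<in>I. g I = blk I x" if g: "g \<in> set_pmf G" and I: "I \<in> F" for g I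
  proof -
    have "g I \<in> set_pmf (p I)"
      using g I unfolding G_def set_Pi_pmf[OF finF] PiE_dflt_def by auto
    then show ?thesis using Ifin[OF I] Ine[OF I] by (auto simp: p_def)
  qed
  have gsub: "g I \<subseteq> I" if "g \<in> set_pmf G" "I \<in> F" for g I
    using supp[OF that] blk_sub by metis
  have gne: "g I \<noteq> {}" if "g \<in> set_pmf G" "I \<in> F" for g I
    using supp[OF that] blk_self by blast
  have gint: "is_interval (g I)" if gI: "g \<in> set_pmf G" "I \<in> F" for g I
  proof -
    obtain a b where ab: "a \<le> b" "I = {a..b}" using interval_ab[OF intv[OF gI(2)]] by blast
    obtain x where "x \<in> I" "g I = blk I x" using supp[OF gI] by blast
    then show ?thesis using blk_interval[OF ab(1)] ab(2) by simp
  qed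
  have gcard: "card (g I) \<le> card I div 4 + 1" if gI: "g \<in> set_pmf G" "I \<in> F" for g I
  proof -
    obtain a b where ab: "a \<le> b" "I = {a..b}" using interval_ab[OF intv[OF gI(2)]] by blast
    obtain x where "x \<in> I" "g I = blk I x" using supp[OF gI] by blast
    then show ?thesis using blk_card[OF ab(1)] ab(2) by simp
  qed
  have ginj: "inj_on g F" if g: "g \<in> set_pmf G" for g
  proof (rule inj_onI)
    fix I J assume IJ: "I \<in> F" "J \<in> F" "g I = g J"
    show "I = J"
    proof (rule ccontr)
      assume "I \<noteq> J"
      then have "I \<inter> J = {}" using disj IJ by blast
      moreover have "g I \<subseteq> I \<inter> J" using gsub[OF g IJ(1)] gsub[OF g IJ(2)] IJ(3) by blast
      ultimately show False using gne[OF g IJ(1)] by blast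
    qed
  qed
  have sys: "rand_interval_system t k FF"
    unfolding rand_interval_system_def
  proof
    fix H assume "H \<in> set_pmf FF"
    then obtain g where g: "g \<in> set_pmf G" and H: "H = g ` F" by (auto simp: FF_def)
    show "interval_system t k H"
      unfolding interval_system_def H
    proof (intro conjI ballI impI)
      show "finite (g ` F)" using finF by simp
      show "card (g ` F) = k" using card_image[OF ginj[OF g]] cardF by simp
    next
      fix J assume "J \<in> g ` F"
      then obtain I where I: "I \<in> F" "J = g I" by auto
      show "is_interval J" using gint[OF g I(1)] I by simp
      show "J \<subseteq> {1..int t}" using gsub[OF g I(1)] inT[OF I(1)] I by blast
    next
      fix J1 J2 assume J: "J1 \<in> g ` F" "J2 \<in> g ` F" "J1 \<noteq> J2"
      then obtain I1 I2 where I: "I1 \<in> F" "I2 \<in> F" "J1 = g I1" "J2 = g I2" by auto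
      then have "I1 \<noteq> I2" using J by auto
      then have "I1 \<inter> I2 = {}" using disj I by blast
      then show "J1 \<inter> J2 = {}" using gsub[OF g I(1)] gsub[OF g I(2)] I by blast
    qed
  qed
  have sumF: "(\<Sum>I\<in>F. card I) \<le> t"
  proof -
    have "pairwise disjnt F" using disj unfolding pairwise_def disjnt_def by blast
    then have "card (\<Union>F) = (\<Sum>I\<in>F. card I)" using Ifin by (intro card_Union_disjoint) auto
    moreover have "card (\<Union>F) \<le> card {1..int t}" using inT by (intro card_mono) auto
    ultimately show ?thesis by simp
  qed
  have kt: "6 * k \<le> t" using assms(3) by linarith
  have vld: "rvalid t FF"
    unfolding rvalid_def
  proof
    fix H assume "H \<in> set_pmf FF"
    then obtain g where g: "g \<in> set_pmf G" and H: "H = g ` F" by (auto simp: FF_def)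
    have "(\<Sum>J\<in>g ` F. card J) = (\<Sum>I\<in>F. card (g I))"
      using sum.reindex[OF ginj[OF g], of card] by simp
    also have "\<dots> \<le> (\<Sum>I\<in>F. card I div 4 + 1)" using gcard[OF g] by (intro sum_mono) auto
    finally have S: "(\<Sum>J\<in>g ` F. card J) \<le> (\<Sum>I\<in>F. card I div 4 + 1)" .
    have "4 * (\<Sum>I\<in>F. card I div 4 + 1) = (\<Sum>I\<in>F. 4 * (card I div 4 + 1))"
      by (simp add: sum_distrib_left)
    also have "\<dots> \<le> (\<Sum>I\<in>F. card I + 4)" by (intro sum_mono) auto
    also have "\<dots> = (\<Sum>I\<in>F. card I) + 4 * k" using cardF by (simp add: sum.distrib)
    finally have "4 * (\<Sum>J\<in>g ` F. card J) \<le> t + 4 * k" using S sumF by linarith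
    then have "2 * (\<Sum>J\<in>g ` F. card J) \<le> t" using kt by linarith
    then have "real (2 * (\<Sum>J\<in>g ` F. card J)) \<le> real t" by (simp only: of_nat_le_iff)
    then have "2 * real (\<Sum>J\<in>g ` F. card J) \<le> real t" by (simp only: of_nat_mult of_nat_numeral)
    then show "valid t H" unfolding valid_def H by linarith
  qed
  have intI: "integrable (measure_pmf G) (\<lambda>g. 1 / real (card (g I)))" for I
    by (rule measure_pmf.integrable_const_bound[where B=1]) (auto intro!: AE_pmfI inv_nat_le1)
  have compI: "measure_pmf.expectation G (\<lambda>g. 1 / real (card (g I))) \<le> 4 / real (card I)"
    if I: "I \<in> F" for I
  proof -
    have "measure_pmf.expectation G (\<lambda>g. 1 / real (card (g I)))
        = measure_pmf.expectation (map_pmf (\<lambda>g. g I) G) (\<lambda>J. 1 / real (card J))" by simp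
    also have "map_pmf (\<lambda>g. g I) G = p I" unfolding G_def using Pi_pmf_component[OF finF, of I undefined p] I by simp
    also have "measure_pmf.expectation (p I) (\<lambda>J. 1 / real (card J))
        = (\<Sum>x\<in>I. 1 / real (card (blk I x))) / card I"
      by (simp add: p_def integral_pmf_of_set[OF Ine[OF I] Ifin[OF I]])
    also have "(\<Sum>x\<in>I. 1 / real (card (blk I x))) = real (card (blk I ` I))"
      by (rule mix_val[OF Ifin[OF I] Ine[OF I]], erule blk_self, rule blk_sub, erule blk_eq)
    also have "card (blk I ` I) \<le> 4"
    proof -
      obtain a b where ab: "a \<le> b" "I = {a..b}" using interval_ab[OF intv[OF I]] by blast
      show ?thesis using blk_count[OF ab(1)] ab(2) by simp
    qed
    finally show ?thesis by (simp add: divide_right_mono)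
  qed
  have rv: "rval FF \<le> 5 * val F"
  proof -
    have "rval FF = measure_pmf.expectation G (\<lambda>g. val (g ` F))"
      by (simp add: rval_def FF_def)
    also have "\<dots> = measure_pmf.expectation G (\<lambda>g. \<Sum>I\<in>F. 1 / real (card (g I)))"
    proof (rule integral_cong_AE)
      show "AE g in measure_pmf G. val (g ` F) = (\<Sum>I\<in>F. 1 / real (card (g I)))"
      proof (rule AE_pmfI)
        fix g assume g: "g \<in> set_pmf G"
        show "val (g ` F) = (\<Sum>I\<in>F. 1 / real (card (g I)))"
          unfolding val_def using sum.reindex[OF ginj[OF g], of "\<lambda>J. 1 / real (card J)"] by simp
      qed
    qed auto
    also have "\<dots> = (\<Sum>I\<in>F. measure_pmf.expectation G (\<lambda>g. 1 / real (card (g I))))"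
      using Bochner_Integration.integral_sum[where I=F and f="\<lambda>I g. 1 / real (card (g I))" and M="measure_pmf G"] intI by simp
    also have "\<dots> \<le> (\<Sum>I\<in>F. 4 / real (card I))" by (intro sum_mono compI)
    also have "\<dots> = 4 * val F" by (simp add: val_def sum_distrib_left)
    also have "\<dots> \<le> 5 * val F"
    proof -
      have "val F \<ge> 0" unfolding val_def by (intro sum_nonneg) auto
      then show ?thesis by simp
    qed
    finally show ?thesis .
  qed
  have rs: "rSets FF = Sets F"
  proof -
    have "rSets FF = bind_pmf G (\<lambda>g. Sets (g ` F))" by (simp add: rSets_def FF_def bind_map_pmf)
    also have "\<dots> = bind_pmf G (\<lambda>g. map_pmf (\<lambda>h. h ` F) (Pi_pmf F undefined (\<lambda>I. pmf_of_set (g I))))"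
      unfolding Sets_def by (intro bind_pmf_cong refl Pi_img_reindex[OF finF ginj])
    also have "\<dots> = map_pmf (\<lambda>h. h ` F) (bind_pmf G (\<lambda>g. Pi_pmf F undefined (\<lambda>I. pmf_of_set (g I))))"
      by (simp add: map_bind_pmf)
    also have "bind_pmf G (\<lambda>g. Pi_pmf F undefined (\<lambda>I. pmf_of_set (g I)))
             = Pi_pmf F undefined (\<lambda>I. bind_pmf (p I) (\<lambda>J. pmf_of_set J))"
      unfolding G_def by (rule Pi_pmf_bind[OF finF, symmetric])
    also have "\<dots> = Pi_pmf F undefined (\<lambda>I. pmf_of_set I)"
    proof (rule Pi_pmf_cong[OF refl refl])
      fix I assume I: "I \<in> F"
      show "bind_pmf (p I) (\<lambda>J. pmf_of_set J) = pmf_of_set I"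
        unfolding p_def bind_map_pmf
        by (rule mix[OF Ifin[OF I] Ine[OF I]], erule blk_self, rule blk_sub, erule blk_eq)
    qed
    finally show ?thesis by (simp add: Sets_def)
  qed
  show ?thesis using sys rs rv vld by blast
qed

end
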